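(* Let $K$ be a field which is finite-dimensional over its center $Z(K)$. Let $L/K$ be a field extension such that $K$ is existentially closed in $L$ and $Z(K)\subset Z(L)$. Then $L/K$ is a regular extension.
   Context: "Field" means a not necessarily commutative division ring; $Z(A)$ denotes the center of a ring $A$. $K$ is existentially closed in $L$ if every existential first-order sentence in the language of rings with constants from $K$ which holds in $L$ also holds in $K$. For a field extension $L/K$ and $x\in L$, $K(x)$ is the subfield of $L$ generated by $K$ and $x$; $x$ is algebraic over $K$ if $K(x)$ is finite-dimensional both as a left and as a right $K$-vector space. $L/K$ is regular if every element of $L$ algebraic over $K$ lies in $K$. *)

theory Defs
  imports Main
begin

text \<open>The big field L is modelled as the whole type 'a (a division ring);
  the subfield K is a subset of it closed under the division ring operations.\<close>

definition subdivring :: "'a::division_ring set \<Rightarrow> bool" where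
  "subdivring F \<longleftrightarrow> 0 \<in> F \<and> 1 \<in> F \<and>
     (\<forall>x\<in>F. \<forall>y\<in>F. x + y \<in> F \<and> x * y \<in> F) \<and>
     (\<forall>x\<in>F. - x \<in> F \<and> inverse x \<in> F)"

definition center_of :: "'a::ring set \<Rightarrow> 'a set" where
  "center_of A = {z \<in> A. \<forall>y\<in>A. z * y = y * z}"

definition left_findim :: "'a::ring set \<Rightarrow> 'a set \<Rightarrow> bool" where
  "left_findim K F \<longleftrightarrow> (\<exists>B. finite B \<and> B \<subseteq> F \<and>
     (\<forall>y\<in>F. \<exists>c. (\<forall>b\<in>B. c b \<in> K) \<and> y = (\<Sum>b\<in>B. c b * b)))"

definition right_findim :: "'a::ring set \<Rightarrow> 'a set \<Rightarrow> bool" where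
  "right_findim K F \<longleftrightarrow> (\<exists>B. finite B \<and> B \<subseteq> F \<and>
     (\<forall>y\<in>F. \<exists>c. (\<forall>b\<in>B. c b \<in> K) \<and> y = (\<Sum>b\<in>B. b * c b)))"

definition gen_subfield :: "'a::division_ring set \<Rightarrow> 'a \<Rightarrow> 'a set" where
  "gen_subfield K x = \<Inter>{F. subdivring F \<and> K \<subseteq> F \<and> x \<in> F}"

definition algebraic_over :: "'a::division_ring set \<Rightarrow> 'a \<Rightarrow> bool" where
  "algebraic_over K x \<longleftrightarrow> left_findim K (gen_subfield K x) \<and> right_findim K (gen_subfield K x)"

definition regular_ext :: "'a::division_ring set \<Rightarrow> bool" where
  "regular_ext K \<longleftrightarrow> (\<forall>x. algebraic_over K x \<longrightarrow> x \<in> K)"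

datatype 'a tm = Var nat | Cst 'a | Zero | One | Add "'a tm" "'a tm" | Neg "'a tm" | Mul "'a tm" "'a tm"

datatype 'a qf = Eq "'a tm" "'a tm" | Not "'a qf" | Conj "'a qf" "'a qf" | Disj "'a qf" "'a qf"

primrec eval_tm :: "(nat \<Rightarrow> 'a::ring_1) \<Rightarrow> 'a tm \<Rightarrow> 'a" where
  "eval_tm v (Var n) = v n"
| "eval_tm v (Cst c) = c"
| "eval_tm v Zero = 0"
| "eval_tm v One = 1"
| "eval_tm v (Add s t) = eval_tm v s + eval_tm v t"
| "eval_tm v (Neg s) = - eval_tm v s"
| "eval_tm v (Mul s t) = eval_tm v s * eval_tm v t"

primrec holds :: "(nat \<Rightarrow> 'a::ring_1) \<Rightarrow> 'a qf \<Rightarrow> bool" where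
  "holds v (Eq s t) = (eval_tm v s = eval_tm v t)"
| "holds v (Not f) = (\<not> holds v f)"
| "holds v (Conj f g) = (holds v f \<and> holds v g)"
| "holds v (Disj f g) = (holds v f \<or> holds v g)"

primrec consts_tm :: "'a tm \<Rightarrow> 'a set" where
  "consts_tm (Var n) = {}"
| "consts_tm (Cst c) = {c}"
| "consts_tm Zero = {}"
| "consts_tm One = {}"
| "consts_tm (Add s t) = consts_tm s \<union> consts_tm t"
| "consts_tm (Neg s) = consts_tm s"
| "consts_tm (Mul s t) = consts_tm s \<union> consts_tm t"

primrec consts_qf :: "'a qf \<Rightarrow> 'a set" where
  "consts_qf (Eq s t) = consts_tm s \<union> consts_tm t"
| "consts_qf (Not f) = consts_qf f"
| "consts_qf (Conj f g) = consts_qf f \<union> consts_qf g"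
| "consts_qf (Disj f g) = consts_qf f \<union> consts_qf g"

text \<open>K is existentially closed in L (= the whole type): every existential sentence
  (existential closure of a quantifier-free formula) with constants from K that holds
  in L also holds in K.\<close>
definition ex_closed :: "'a::division_ring set \<Rightarrow> bool" where
  "ex_closed K \<longleftrightarrow> (\<forall>\<phi>. consts_qf \<phi> \<subseteq> K \<longrightarrow> (\<exists>v. holds v \<phi>) \<longrightarrow>
                        (\<exists>v. range v \<subseteq> K \<and> holds v \<phi>))"

end

theory Submission
  imports Defs
begin

definition spans :: "'a::ring set \<Rightarrow> 'i set \<Rightarrow> ('i \<Rightarrow> 'a) \<Rightarrow> 'a set \<Rightarrow> bool" where
  "spans Z I b S \<longleftrightarrow> (\<forall>y\<in>S. \<exists>c. (\<forall>i\<in>I. c i \<in> Z) \<and> y = (\<Sum>i\<in>I. c i * b i))"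

primrec sumtm :: "(nat \<Rightarrow> 'a tm) \<Rightarrow> nat \<Rightarrow> 'a tm" where
  "sumtm f 0 = Zero" | "sumtm f (Suc n) = Add (sumtm f n) (f n)"

primrec conjs :: "(nat \<Rightarrow> 'a qf) \<Rightarrow> nat \<Rightarrow> 'a qf" where
  "conjs f 0 = Eq Zero Zero" | "conjs f (Suc n) = Conj (conjs f n) (f n)"

lemma eval_sumtm: "eval_tm v (sumtm f n) = (\<Sum>i<n. eval_tm v (f i))"
  by (induct n) auto

lemma holds_conjs: "holds v (conjs f n) = (\<forall>i<n. holds v (f i))"
  by (induct n) (auto simp: less_Suc_eq)

lemma consts_sumtm: "(\<forall>i<n. consts_tm (f i) \<subseteq> S) \<Longrightarrow> consts_tm (sumtm f n) \<subseteq> S"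
  by (induct n) auto

lemma consts_conjs: "(\<forall>i<n. consts_qf (f i) \<subseteq> S) \<Longrightarrow> consts_qf (conjs f n) \<subseteq> S"
  by (induct n) auto

lemma sd_0: "subdivring S \<Longrightarrow> 0 \<in> S" by (simp add: subdivring_def)
lemma sd_1: "subdivring S \<Longrightarrow> 1 \<in> S" by (simp add: subdivring_def)
lemma sd_add: "subdivring S \<Longrightarrow> x \<in> S \<Longrightarrow> y \<in> S \<Longrightarrow> x + y \<in> S" by (simp add: subdivring_def)
lemma sd_mult: "subdivring S \<Longrightarrow> x \<in> S \<Longrightarrow> y \<in> S \<Longrightarrow> x * y \<in> S" by (simp add: subdivring_def)
lemma sd_uminus: "subdivring S \<Longrightarrow> x \<in> S \<Longrightarrow> - x \<in> S" by (simp add: subdivring_def)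
lemma sd_inverse: "subdivring S \<Longrightarrow> x \<in> S \<Longrightarrow> inverse x \<in> S" by (simp add: subdivring_def)
lemma sd_diff: "subdivring S \<Longrightarrow> x \<in> S \<Longrightarrow> y \<in> S \<Longrightarrow> x - y \<in> S"
  by (metis diff_conv_add_uminus sd_add sd_uminus)
lemma sd_sum: "subdivring S \<Longrightarrow> (\<forall>i\<in>A. f i \<in> S) \<Longrightarrow> sum f A \<in> S"
  by (induct A rule: infinite_finite_induct) (auto intro: sd_0 sd_add)

lemma inv_comm:
  fixes z :: "'a::division_ring"
  assumes "z * y = y * z" shows "inverse z * y = y * inverse z"
proof (cases "z = 0")
  case False
  have "inverse z * y = inverse z * (y * z) * inverse z" using False by (simp add: mult.assoc)
  also have "\<dots> = inverse z * (z * y) * inverse z" using assms by simp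
  also have "\<dots> = y * inverse z" using False by (simp add: mult.assoc[symmetric])
  finally show ?thesis .
qed simp

lemma center_sd:
  assumes sK: "subdivring (K::'a::division_ring set)" shows "subdivring (center_of K)"
proof -
  have memI: "z \<in> center_of K" if "z \<in> K" "\<And>w. w \<in> K \<Longrightarrow> z * w = w * z" for z
    using that by (simp add: center_of_def)
  have memK: "z \<in> K" if "z \<in> center_of K" for z using that by (simp add: center_of_def)
  have memC: "z * w = w * z" if "z \<in> center_of K" "w \<in> K" for z w using that by (simp add: center_of_def)
  have M: "x * y \<in> center_of K" if x: "x \<in> center_of K" and y: "y \<in> center_of K" for x y
  proof (rule memI)
    show "x * y \<in> K" by (rule sd_mult[OF sK memK[OF x] memK[OF y]])
    fix w assume w: "w \<in> K"
    have 1: "y * w = w * y" by (rule memC[OF y w])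
    have 2: "x * w = w * x" by (rule memC[OF x w])
    have "x * y * w = x * (w * y)" using 1 by (simp only: mult.assoc)
    also have "\<dots> = (w * x) * y" using 2 by (simp only: mult.assoc[symmetric])
    finally show "x * y * w = w * (x * y)" by (simp only: mult.assoc)
  qed
  have A: "x + y \<in> center_of K" if x: "x \<in> center_of K" and y: "y \<in> center_of K" for x y
  proof (rule memI)
    show "x + y \<in> K" by (rule sd_add[OF sK memK[OF x] memK[OF y]])
    fix w assume w: "w \<in> K"
    show "(x + y) * w = w * (x + y)" using memC[OF x w] memC[OF y w] by (simp add: distrib_left distrib_right)
  qed
  have N: "- x \<in> center_of K" if x: "x \<in> center_of K" for x
  proof (rule memI)
    show "- x \<in> K" by (rule sd_uminus[OF sK memK[OF x]])
    fix w assume w: "w \<in> K"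
    show "(- x) * w = w * (- x)" using memC[OF x w] by simp
  qed
  have I: "inverse x \<in> center_of K" if x: "x \<in> center_of K" for x
  proof (rule memI)
    show "inverse x \<in> K" by (rule sd_inverse[OF sK memK[OF x]])
    fix w assume w: "w \<in> K"
    show "inverse x * w = w * inverse x" by (rule inv_comm[OF memC[OF x w]])
  qed
  have "0 \<in> center_of K" by (rule memI[OF sd_0[OF sK]]) simp
  moreover have "1 \<in> center_of K" by (rule memI[OF sd_1[OF sK]]) simp
  ultimately show ?thesis unfolding subdivring_def by (simp add: M A N I)
qed

lemma gen_sd: "subdivring (gen_subfield K x)"
  unfolding gen_subfield_def subdivring_def by auto

lemma gen_K: "K \<subseteq> gen_subfield K x" and gen_x: "x \<in> gen_subfield K x"
  unfolding gen_subfield_def by auto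

lemma reindex_span:
  assumes "finite I" "spans Z I b S" "b ` I \<subseteq> S"
  shows "\<exists>b'. spans Z {..<card I} b' S \<and> (\<forall>i<card I. b' i \<in> S)"
proof -
  obtain h where h: "bij_betw h {..<card I} I"
    using ex_bij_betw_nat_finite[OF assms(1)] by (auto simp: atLeast0LessThan)
  have hI: "i < card I \<Longrightarrow> h i \<in> I" for i using h by (auto simp: bij_betw_def)
  have "spans Z {..<card I} (b \<circ> h) S"
    unfolding spans_def
  proof
    fix y assume "y \<in> S"
    then obtain c where c: "\<forall>i\<in>I. c i \<in> Z" "y = (\<Sum>i\<in>I. c i * b i)" using assms(2) by (auto simp: spans_def)
    have "y = (\<Sum>i<card I. (c \<circ> h) i * (b \<circ> h) i)"
      using c(2) sum.reindex_bij_betw[OF h, of "\<lambda>i. c i * b i"] by simp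
    moreover have "\<forall>i\<in>{..<card I}. (c \<circ> h) i \<in> Z" using c(1) hI by auto
    ultimately show "\<exists>c. (\<forall>i\<in>{..<card I}. c i \<in> Z) \<and> y = (\<Sum>i<card I. c i * (b \<circ> h) i)" by blast
  qed
  moreover have "\<forall>i<card I. (b \<circ> h) i \<in> S" using hI assms(3) by auto
  ultimately show ?thesis by blast
qed

lemma remove_span:
  fixes b :: "'i \<Rightarrow> 'a::division_ring"
  assumes sZ: "subdivring Z" and fin: "finite I" and sp: "spans Z I b S" and j: "j \<in> I"
    and cZ: "\<forall>i\<in>I. c i \<in> Z" and cj: "c j \<noteq> 0" and z: "(\<Sum>i\<in>I. c i * b i) = 0"
  shows "spans Z (I - {j}) b S"
  unfolding spans_def
proof
  fix y assume "y \<in> S"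
  then obtain d where d: "\<forall>i\<in>I. d i \<in> Z" "y = (\<Sum>i\<in>I. d i * b i)" using sp by (auto simp: spans_def)
  have "c j * b j + (\<Sum>i\<in>I-{j}. c i * b i) = 0" using z sum.remove[OF fin j, of "\<lambda>i. c i * b i"] by simp
  hence "c j * b j = - (\<Sum>i\<in>I-{j}. c i * b i)" by (simp add: eq_neg_iff_add_eq_0)
  hence "inverse (c j) * (c j * b j) = inverse (c j) * - (\<Sum>i\<in>I-{j}. c i * b i)" by simp
  hence bj: "b j = (\<Sum>i\<in>I-{j}. (- (inverse (c j) * c i)) * b i)"
    using cj by (simp add: mult.assoc[symmetric] sum_distrib_left sum_negf)
  have "y = d j * b j + (\<Sum>i\<in>I-{j}. d i * b i)" using d(2) sum.remove[OF fin j, of "\<lambda>i. d i * b i"] by simp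
  also have "\<dots> = (\<Sum>i\<in>I-{j}. (d i - d j * inverse (c j) * c i) * b i)"
    by (simp add: bj sum_distrib_left sum.distrib[symmetric] algebra_simps)
  finally have "y = (\<Sum>i\<in>I-{j}. (d i - d j * inverse (c j) * c i) * b i)" .
  moreover have "\<forall>i\<in>I-{j}. d i - d j * inverse (c j) * c i \<in> Z"
    using d(1) cZ j sZ by (auto intro!: sd_diff sd_mult sd_inverse)
  ultimately show "\<exists>c. (\<forall>i\<in>I-{j}. c i \<in> Z) \<and> y = (\<Sum>i\<in>I-{j}. c i * b i)"
    by (intro exI[where x="\<lambda>i. d i - d j * inverse (c j) * c i"]) simp
qed

lemma mult_table:
  fixes f :: "nat \<Rightarrow> 'a::ring"
  assumes tab: "\<forall>i<n. \<forall>j<n. f i * f j = (\<Sum>k<n. m i j k * f k)"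
    and cen: "\<forall>j<n. \<forall>t. c' j * t = t * c' j"
  shows "(\<Sum>i<n. c i * f i) * (\<Sum>j<n. c' j * f j) = (\<Sum>k<n. (\<Sum>i<n. \<Sum>j<n. c i * c' j * m i j k) * f k)"
proof -
  have "(\<Sum>i<n. c i * f i) * (\<Sum>j<n. c' j * f j) = (\<Sum>i<n. \<Sum>j<n. c i * f i * (c' j * f j))"
    by (subst sum_distrib_right) (simp add: sum_distrib_left)
  also have "\<dots> = (\<Sum>i<n. \<Sum>j<n. c i * c' j * (f i * f j))"
  proof (intro sum.cong refl)
    fix i j assume "j \<in> {..<n}"
    hence "f i * c' j = c' j * f i" using cen by simp
    thus "c i * f i * (c' j * f j) = c i * c' j * (f i * f j)"
      by (metis mult.assoc)
  qed
  also have "\<dots> = (\<Sum>i<n. \<Sum>j<n. \<Sum>k<n. c i * c' j * m i j k * f k)"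
    using tab by (simp add: sum_distrib_left mult.assoc)
  also have "\<dots> = (\<Sum>i<n. \<Sum>k<n. \<Sum>j<n. c i * c' j * m i j k * f k)"
    by (rule sum.cong[OF refl], rule sum.swap)
  also have "\<dots> = (\<Sum>k<n. \<Sum>i<n. \<Sum>j<n. c i * c' j * m i j k * f k)"
    by (rule sum.swap)
  also have "\<dots> = (\<Sum>k<n. (\<Sum>i<n. \<Sum>j<n. c i * c' j * m i j k) * f k)"
    by (simp add: sum_distrib_right)
  finally show ?thesis .
qed

lemma lin_comb:
  fixes f :: "nat \<Rightarrow> 'a::ring"
  shows "(\<Sum>k<n. (\<Sum>l<p. w l * r l k) * f k) = (\<Sum>l<p. w l * (\<Sum>k<n. r l k * f k))"
proof -
  have "(\<Sum>k<n. (\<Sum>l<p. w l * r l k) * f k) = (\<Sum>k<n. \<Sum>l<p. w l * r l k * f k)"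
    by (simp add: sum_distrib_right)
  also have "\<dots> = (\<Sum>l<p. \<Sum>k<n. w l * r l k * f k)" by (rule sum.swap)
  also have "\<dots> = (\<Sum>l<p. w l * (\<Sum>k<n. r l k * f k))" by (simp add: sum_distrib_left mult.assoc)
  finally show ?thesis .
qed

theorem theorem2:
  fixes K :: "'a::division_ring set"
  assumes "subdivring K"
    and "left_findim (center_of K) K"
    and "ex_closed K"
    and "center_of K \<subseteq> center_of (UNIV :: 'a set)"
  shows "regular_ext K"
proof -
  define Z where "Z = center_of K"
  have sK: "subdivring K" by (rule assms(1))
  have sZ: "subdivring Z" unfolding Z_def by (rule center_sd[OF sK])
  have ZK: "Z \<subseteq> K" by (auto simp: Z_def center_of_def)
  have Zc: "z * t = t * z" if "z \<in> Z" for z t using assms(4) that by (auto simp: Z_def center_of_def)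
  from assms(2) obtain D where D: "finite D" "D \<subseteq> K" "spans Z D (\<lambda>d. d) K"
    unfolding left_findim_def spans_def Z_def by blast
  have DK: "(\<lambda>d. d) ` D \<subseteq> K" using D(2) by auto
  obtain p :: nat and e where e: "spans Z {..<p} e K" "\<forall>l<p. e l \<in> K"
    using reindex_span[OF D(1) D(3) DK] by blast
  show ?thesis unfolding regular_ext_def
  proof (intro allI impI)
    fix x assume alg: "algebraic_over K x"
    define E where "E = gen_subfield K x"
    have sE: "subdivring E" unfolding E_def by (rule gen_sd)
    have KE: "K \<subseteq> E" unfolding E_def by (rule gen_K)
    have xE: "x \<in> E" unfolding E_def by (rule gen_x)
    from alg obtain C where C: "finite C" "C \<subseteq> E" "\<forall>y\<in>E. \<exists>c. (\<forall>b\<in>C. c b \<in> K) \<and> y = (\<Sum>b\<in>C. c b * b)"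
      unfolding algebraic_over_def left_findim_def E_def by blast
    have spDC: "spans Z (D \<times> C) (\<lambda>(d, c). d * c) E"
      unfolding spans_def
    proof
      fix y assume "y \<in> E"
      then obtain k where k: "\<forall>b\<in>C. k b \<in> K" "y = (\<Sum>b\<in>C. k b * b)" using C(3) by blast
      have "\<forall>b\<in>C. \<exists>w. (\<forall>d\<in>D. w d \<in> Z) \<and> k b = (\<Sum>d\<in>D. w d * d)"
        using k(1) D(3) unfolding spans_def by blast
      then obtain w where w: "\<forall>b\<in>C. (\<forall>d\<in>D. w b d \<in> Z) \<and> k b = (\<Sum>d\<in>D. w b d * d)"
        by metis
      have "y = (\<Sum>b\<in>C. (\<Sum>d\<in>D. w b d * d) * b)" using k(2) w by simp
      also have "\<dots> = (\<Sum>b\<in>C. \<Sum>d\<in>D. w b d * (d * b))" by (simp add: sum_distrib_right mult.assoc)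
      also have "\<dots> = (\<Sum>d\<in>D. \<Sum>b\<in>C. w b d * (d * b))" by (rule sum.swap)
      also have "\<dots> = (\<Sum>(d, b)\<in>D \<times> C. w b d * (d * b))" by (rule sum.cartesian_product)
      also have "\<dots> = (\<Sum>q\<in>D \<times> C. (\<lambda>(d, b). w b d) q * (\<lambda>(d, c). d * c) q)"
        by (rule sum.cong) auto
      finally have "y = (\<Sum>q\<in>D \<times> C. (\<lambda>(d, b). w b d) q * (\<lambda>(d, c). d * c) q)" .
      moreover have "\<forall>q\<in>D \<times> C. (\<lambda>(d, b). w b d) q \<in> Z" using w by auto
      ultimately show "\<exists>c. (\<forall>i\<in>D \<times> C. c i \<in> Z) \<and> y = (\<Sum>i\<in>D \<times> C. c i * (\<lambda>(d, c). d * c) i)"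
        by blast
    qed
    have DCE: "(\<lambda>(d, c). d * c) ` (D \<times> C) \<subseteq> E" using D(2) C(2) KE sE sd_mult by fastforce
    define P where "P (n::nat) \<longleftrightarrow> (\<exists>b. spans Z {..<n} b E \<and> (\<forall>i<n. b i \<in> E))" for n
    have finDC: "finite (D \<times> C)" using D(1) C(1) by simp
    obtain b0 where "spans Z {..<card (D \<times> C)} b0 E" "\<forall>i<card (D \<times> C). b0 i \<in> E"
      using reindex_span[OF finDC spDC DCE] by blast
    hence "P (card (D \<times> C))" unfolding P_def by blast
    hence "\<exists>n. P n" by blast
    define n where "n = (LEAST n. P n)"
    have "P n" unfolding n_def by (rule LeastI_ex) fact
    then obtain b where b: "spans Z {..<n} b E" "\<forall>i<n. b i \<in> E" unfolding P_def by blast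
    have minimal: "n \<le> n'" if "P n'" for n' unfolding n_def by (rule Least_le) fact
    have indep: "\<forall>i<n. c i = 0" if cZ: "\<forall>i<n. c i \<in> Z" and cs: "(\<Sum>i<n. c i * b i) = 0" for c
    proof (rule ccontr)
      assume "\<not> (\<forall>i<n. c i = 0)"
      then obtain j where j: "j < n" "c j \<noteq> 0" by blast
      have sp': "spans Z ({..<n} - {j}) b E"
        by (rule remove_span[OF sZ _ b(1)]) (use j cZ cs in auto)
      have bE': "b ` ({..<n} - {j}) \<subseteq> E" using b(2) by auto
      have fin': "finite ({..<n} - {j})" by simp
      obtain b' where "spans Z {..<card ({..<n} - {j})} b' E" "\<forall>i<card ({..<n} - {j}). b' i \<in> E"
        using reindex_span[OF fin' sp' bE'] by blast
      hence "P (card ({..<n} - {j}))" unfolding P_def by blast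
      hence "n \<le> card ({..<n} - {j})" by (rule minimal)
      moreover have "card ({..<n} - {j}) = n - 1" using j by simp
      ultimately show False using j by simp
    qed
    have uniq: "\<forall>i<n. c i = d i" if "\<forall>i<n. c i \<in> Z" "\<forall>i<n. d i \<in> Z"
      and eq: "(\<Sum>i<n. c i * b i) = (\<Sum>i<n. d i * b i)" for c d
    proof -
      have "(\<Sum>i<n. (c i - d i) * b i) = (\<Sum>i<n. c i * b i) - (\<Sum>i<n. d i * b i)"
        by (simp only: left_diff_distrib sum_subtractf)
      hence z: "(\<Sum>i<n. (c i - d i) * b i) = 0" using eq by simp
      have cd: "\<forall>i<n. c i - d i \<in> Z" using that(1,2) by (auto intro: sd_diff[OF sZ])
      have "\<forall>i<n. c i - d i = 0" by (rule indep[OF cd z])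
      thus ?thesis by simp
    qed
    have bspan: "\<exists>c. (\<forall>k<n. c k \<in> Z) \<and> a = (\<Sum>k<n. c k * b k)" if "a \<in> E" for a
    proof -
      have "\<exists>c. (\<forall>i\<in>{..<n}. c i \<in> Z) \<and> a = (\<Sum>i<n. c i * b i)"
        using b(1) that unfolding spans_def by (rule bspec)
      then obtain c where c1: "\<forall>i\<in>{..<n}. c i \<in> Z" and c2: "a = (\<Sum>i<n. c i * b i)"
        by (elim exE conjE)
      have "\<forall>k<n. c k \<in> Z" using c1 by simp
      with c2 show ?thesis by blast
    qed
    define m where "m i j = (SOME c. (\<forall>k<n. c k \<in> Z) \<and> b i * b j = (\<Sum>k<n. c k * b k))" for i j
    have m: "(\<forall>k<n. m i j k \<in> Z) \<and> b i * b j = (\<Sum>k<n. m i j k * b k)" if "i < n" "j < n" for i j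
    proof -
      have "b i * b j \<in> E" using b(2) that by (auto intro: sd_mult[OF sE])
      hence ex: "\<exists>c. (\<forall>k<n. c k \<in> Z) \<and> b i * b j = (\<Sum>k<n. c k * b k)" by (rule bspan)
      show ?thesis unfolding m_def by (rule someI_ex[OF ex])
    qed
    define r where "r l = (SOME c. (\<forall>k<n. c k \<in> Z) \<and> e l = (\<Sum>k<n. c k * b k))" for l
    have r: "(\<forall>k<n. r l k \<in> Z) \<and> e l = (\<Sum>k<n. r l k * b k)" if "l < p" for l
    proof -
      have "e l \<in> E" using e(2) KE that by auto
      hence ex: "\<exists>c. (\<forall>k<n. c k \<in> Z) \<and> e l = (\<Sum>k<n. c k * b k)" by (rule bspan)
      show ?thesis unfolding r_def by (rule someI_ex[OF ex])
    qed
    define F where "F = Conj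
       (conjs (\<lambda>i. conjs (\<lambda>j. Eq (Mul (Var i) (Var j)) (sumtm (\<lambda>k. Mul (Cst (m i j k)) (Var k)) n)) n) n)
       (conjs (\<lambda>l. Eq (Cst (e l)) (sumtm (\<lambda>k. Mul (Cst (r l k)) (Var k)) n)) p)"
    have holdsF: "holds v F \<longleftrightarrow> (\<forall>i<n. \<forall>j<n. v i * v j = (\<Sum>k<n. m i j k * v k))
        \<and> (\<forall>l<p. e l = (\<Sum>k<n. r l k * v k))" for v
      by (simp add: F_def holds_conjs eval_sumtm)
    have "holds b F" unfolding holdsF using m r by auto
    moreover have "consts_qf F \<subseteq> K"
    proof -
      have c1: "consts_tm (sumtm (\<lambda>k. Mul (Cst (m i j k)) (Var k)) n) \<subseteq> K" if "i < n" "j < n" for i j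
        by (rule consts_sumtm) (use m[OF that] ZK in auto)
      have c2: "consts_tm (sumtm (\<lambda>k. Mul (Cst (r l k)) (Var k)) n) \<subseteq> K" if "l < p" for l
        by (rule consts_sumtm) (use r[OF that] ZK in auto)
      have "consts_qf (conjs (\<lambda>i. conjs (\<lambda>j. Eq (Mul (Var i) (Var j)) (sumtm (\<lambda>k. Mul (Cst (m i j k)) (Var k)) n)) n) n) \<subseteq> K"
        by (intro consts_conjs allI impI) (simp add: c1)
      moreover have "consts_qf (conjs (\<lambda>l. Eq (Cst (e l)) (sumtm (\<lambda>k. Mul (Cst (r l k)) (Var k)) n)) p) \<subseteq> K"
        by (intro consts_conjs allI impI) (simp add: c2 e(2))
      ultimately show ?thesis unfolding F_def by simp
    qed
    ultimately obtain y where yK: "range y \<subseteq> K" and hy: "holds y F"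
      using assms(3) unfolding ex_closed_def by blast
    have ytab: "\<forall>i<n. \<forall>j<n. y i * y j = (\<Sum>k<n. m i j k * y k)"
      and ye: "\<forall>l<p. e l = (\<Sum>k<n. r l k * y k)" using hy unfolding holdsF by auto
    have btab: "\<forall>i<n. \<forall>j<n. b i * b j = (\<Sum>k<n. m i j k * b k)" using m by auto
    define Phi where "Phi a u \<longleftrightarrow> (\<exists>c. (\<forall>k<n. c k \<in> Z) \<and> a = (\<Sum>k<n. c k * b k) \<and> u = (\<Sum>k<n. c k * y k))" for a u
    have Phi_uniq: "u = u'" if PA: "Phi a u" and PB: "Phi a u'" for a u u'
    proof -
      obtain c where c: "\<forall>k<n. c k \<in> Z" "a = (\<Sum>k<n. c k * b k)" "u = (\<Sum>k<n. c k * y k)"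
        using PA unfolding Phi_def by (elim exE conjE)
      obtain d where d: "\<forall>k<n. d k \<in> Z" "a = (\<Sum>k<n. d k * b k)" "u' = (\<Sum>k<n. d k * y k)"
        using PB unfolding Phi_def by (elim exE conjE)
      have "(\<Sum>k<n. c k * b k) = (\<Sum>k<n. d k * b k)" using c(2) d(2) by (rule subst)
      hence "\<forall>k<n. c k = d k" by (rule uniq[OF c(1) d(1)])
      hence "(\<Sum>k<n. c k * y k) = (\<Sum>k<n. d k * y k)" by (intro sum.cong) auto
      thus ?thesis using c(3) d(3) by simp
    qed
    have Phi_ex: "\<exists>u. Phi a u" if aE: "a \<in> E" for a
    proof -
      obtain c where c: "\<forall>k<n. c k \<in> Z" "a = (\<Sum>k<n. c k * b k)"
        using bspan[OF aE] by (elim exE conjE)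
      have "Phi a (\<Sum>k<n. c k * y k)" unfolding Phi_def
        by (intro exI[of _ c]) (use c in blast)
      thus ?thesis by (rule exI)
    qed
    have Phi_mult: "Phi (a * a') (u * u')" if PA: "Phi a u" and PB: "Phi a' u'" for a a' u u'
    proof -
      obtain c where c: "\<forall>k<n. c k \<in> Z" "a = (\<Sum>k<n. c k * b k)" "u = (\<Sum>k<n. c k * y k)"
        using PA unfolding Phi_def by (elim exE conjE)
      obtain d where d: "\<forall>k<n. d k \<in> Z" "a' = (\<Sum>k<n. d k * b k)" "u' = (\<Sum>k<n. d k * y k)"
        using PB unfolding Phi_def by (elim exE conjE)
      have cen: "\<forall>j<n. \<forall>t. d j * t = t * d j" using d(1) Zc by blast
      have "a * a' = (\<Sum>k<n. (\<Sum>i<n. \<Sum>j<n. c i * d j * m i j k) * b k)"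
        using mult_table[OF btab cen, of c] c(2) d(2) by simp
      moreover have "u * u' = (\<Sum>k<n. (\<Sum>i<n. \<Sum>j<n. c i * d j * m i j k) * y k)"
        using mult_table[OF ytab cen, of c] c(3) d(3) by simp
      moreover have "\<forall>k<n. (\<Sum>i<n. \<Sum>j<n. c i * d j * m i j k) \<in> Z"
        using c(1) d(1) m sZ by (auto intro!: sd_sum sd_mult)
      ultimately show ?thesis unfolding Phi_def
        by (intro exI[of _ "\<lambda>k. \<Sum>i<n. \<Sum>j<n. c i * d j * m i j k"]) blast
    qed
    have Phi_diff: "Phi (a - a') (u - u')" if PA: "Phi a u" and PB: "Phi a' u'" for a a' u u'
    proof -
      obtain c where c: "\<forall>k<n. c k \<in> Z" "a = (\<Sum>k<n. c k * b k)" "u = (\<Sum>k<n. c k * y k)"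
        using PA unfolding Phi_def by (elim exE conjE)
      obtain d where d: "\<forall>k<n. d k \<in> Z" "a' = (\<Sum>k<n. d k * b k)" "u' = (\<Sum>k<n. d k * y k)"
        using PB unfolding Phi_def by (elim exE conjE)
      have "a - a' = (\<Sum>k<n. (c k - d k) * b k)" "u - u' = (\<Sum>k<n. (c k - d k) * y k)"
        using c d by (simp_all add: left_diff_distrib sum_subtractf)
      moreover have "\<forall>k<n. c k - d k \<in> Z" using c(1) d(1) sZ sd_diff by blast
      ultimately show ?thesis unfolding Phi_def
        by (intro exI[of _ "\<lambda>k. c k - d k"]) blast
    qed
    have Phi_K: "Phi t t" if tK: "t \<in> K" for t
    proof -
      have "\<exists>w. (\<forall>i\<in>{..<p}. w i \<in> Z) \<and> t = (\<Sum>l<p. w l * e l)"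
        using e(1) tK unfolding spans_def by (rule bspec)
      then obtain w where w1: "\<forall>i\<in>{..<p}. w i \<in> Z" and w2: "t = (\<Sum>l<p. w l * e l)"
        by (elim exE conjE)
      have w: "\<forall>l<p. w l \<in> Z" "t = (\<Sum>l<p. w l * e l)" using w1 w2 by auto
      have "t = (\<Sum>k<n. (\<Sum>l<p. w l * r l k) * b k)"
        unfolding lin_comb using w(2) r by simp
      moreover have "t = (\<Sum>k<n. (\<Sum>l<p. w l * r l k) * y k)"
        unfolding lin_comb using w(2) ye by simp
      moreover have "\<forall>k<n. (\<Sum>l<p. w l * r l k) \<in> Z"
        using w(1) r sZ by (auto intro!: sd_sum sd_mult)
      ultimately show ?thesis unfolding Phi_def
        by (intro exI[of _ "\<lambda>k. \<Sum>l<p. w l * r l k"]) blast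
    qed
    obtain u where u: "Phi x u" using Phi_ex[OF xE] by blast
    have uK: "u \<in> K"
    proof -
      obtain c where c: "\<forall>k<n. c k \<in> Z" "u = (\<Sum>k<n. c k * y k)"
        using u unfolding Phi_def by (elim exE conjE)
      have "\<forall>k<n. c k * y k \<in> K" using c(1) yK ZK sK sd_mult by blast
      thus ?thesis using c(2) sd_sum[OF sK, of "{..<n}" "\<lambda>k. c k * y k"] by simp
    qed
    have P0: "Phi (x - u) 0" using Phi_diff[OF u Phi_K[OF uK]] by simp
    show "x \<in> K"
    proof (rule ccontr)
      assume "x \<notin> K"
      hence nz: "x - u \<noteq> 0" using uK by auto
      have "inverse (x - u) \<in> E" using xE uK KE sE sd_diff sd_inverse by blast
      then obtain v where "Phi (inverse (x - u)) v" using Phi_ex by blast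
      from Phi_mult[OF P0 this] have "Phi 1 0" using nz by simp
      moreover have "Phi 1 1" using Phi_K sd_1[OF sK] by blast
      ultimately show False using Phi_uniq by fastforce
    qed
  qed
qed

end
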